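(* Let $\mathfrak A$ be a commutative ring and let $(a_i),(a^*_i),(b_i),(b^*_i)$, $i\in\mathbb Z$, be sequences in $\mathfrak A$ with $a_0=a^*_0=b_0=b^*_0=1$ and $a_i=a^*_i=b_i=b^*_i=0$ for $i<0$, such that $\big(\sum_{i\ge0}a_it^i\big)\big(\sum_{i\ge0}b_it^i\big)=1$ and $\big(\sum_{i\ge0}a^*_it^i\big)\big(\sum_{i\ge0}b^*_it^i\big)=1$ as formal power series. Let $\nu,\mu$ be partitions, $q=\ell(\nu)$, $p=\ell(\mu)$, $s=\ell(\nu')$, $r=\ell(\mu')$ ($'$ denoting conjugation). Let $A$ be the $(p+q)\times(p+q)$ matrix with $A_{ij}=a^*_{\nu_{q+1-i}+i-j}$ for $1\le i\le q$ and $A_{q+i,j}=a_{\mu_i-q-i+j}$ for $1\le i\le p$, and $B$ the $(r+s)\times(r+s)$ matrix with $B_{ij}=b^*_{\nu'_{s+1-i}+i-j}$ for $1\le i\le s$ and $B_{s+i,j}=b_{\mu'_i-s-i+j}$ for $1\le i\le r$. Then $\det A=(-1)^{|\nu|+|\mu|}\det B$.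
   Context: $\ell(\lambda)$ is the number of nonzero parts of a partition $\lambda$ and $|\lambda|$ its size. Explicitly, the rows of $A$ are $(a^*_{\nu_q},a^*_{\nu_q-1},\dots,a^*_{\nu_q-q-p+1}),\dots,(a^*_{\nu_1+q-1},\dots,a^*_{\nu_1-p}),(a_{\mu_1-q},\dots,a_{\mu_1+p-1}),\dots,(a_{\mu_p-q-p+1},\dots,a_{\mu_p})$, and $B$ is analogous with $b^*,b,\nu',\mu',s,r$. *)

theory Defs
  imports "Jordan_Normal_Form.Determinant" "HOL-Computational_Algebra.Formal_Power_Series"
begin

text \<open>Partitions are represented as weakly decreasing lists of positive naturals
  (the nonzero parts). The i-th part (1-indexed) is the list entry at index i-1.\<close>

definition is_partition :: "nat list \<Rightarrow> bool" where
  "is_partition lam \<longleftrightarrow> sorted_wrt (\<ge>) lam \<and> 0 \<notin> set lam"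

definition part_len :: "nat list \<Rightarrow> nat" where
  "part_len lam = length lam"

definition part_size :: "nat list \<Rightarrow> nat" where
  "part_size lam = sum_list lam"

definition conj_part :: "nat list \<Rightarrow> nat list" where
  "conj_part lam = map (\<lambda>j. length (filter (\<lambda>x. j \<le> x) lam))
                       [1..<Suc (if lam = [] then 0 else Max (set lam))]"

definition gen_fps :: "(int \<Rightarrow> 'a::comm_ring_1) \<Rightarrow> 'a fps" where
  "gen_fps c = Abs_fps (\<lambda>n. c (int n))"

text \<open>The matrix A (0-indexed entries): rows 1..q use the star sequence and
  \<nu>_{q+1-i}, rows q+1..q+p use the plain sequence and \<mu>_i.\<close>
definition jt_matrix :: "(int \<Rightarrow> 'a::comm_ring_1) \<Rightarrow> (int \<Rightarrow> 'a) \<Rightarrow> nat list \<Rightarrow> nat list \<Rightarrow> 'a mat" where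
  "jt_matrix ast a \<nu> \<mu> =
     (let q = part_len \<nu>; p = part_len \<mu> in
      mat (p + q) (p + q) (\<lambda>(i, j).
        if i < q then ast (int (\<nu> ! (q - 1 - i)) + int i - int j)
        else a (int (\<mu> ! (i - q)) - int i + int j)))"

end

theory Submission
  imports Defs
begin


lemma smono_ge: assumes "\<And>i j. i < j \<Longrightarrow> j < n \<Longrightarrow> (c::nat\<Rightarrow>nat) i < c j" "j \<le> i" "i < n"
  shows "c j + (i - j) \<le> c i"
  using assms(2,3)
proof (induction i)
  case 0 then show ?case by simp
next
  case (Suc i)
  show ?case
  proof (cases "j = Suc i")
    case True then show ?thesis by simp
  next
    case False
    then have "j \<le> i" using Suc by simp
    with Suc have "c j + (i - j) \<le> c i" by simp
    moreover have "c i < c (Suc i)" using assms(1) Suc by simp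
    ultimately show ?thesis using \<open>j \<le> i\<close> by simp
  qed
qed

lemma smono_id: assumes "\<And>i j. i < j \<Longrightarrow> j < k \<Longrightarrow> (c::nat\<Rightarrow>nat) i < c j" "\<And>j. j < k \<Longrightarrow> c j < k" "j < k"
  shows "c j = j"
proof -
  have "0 + (j - 0) \<le> c j" using smono_ge[of k c 0 j, OF assms(1)] assms(3) by simp
  moreover have "c j + (k - 1 - j) \<le> c (k-1)" using smono_ge[of k c j "k-1", OF assms(1)] assms(3) by simp
  moreover have "c (k-1) < k" using assms(2) assms(3) by simp
  ultimately show ?thesis by simp
qed

lemma core_det:
  fixes F :: "nat \<Rightarrow> nat \<Rightarrow> 'a::comm_ring_1"
  assumes "\<And>i j. i < j \<Longrightarrow> j < n \<Longrightarrow> s i < s j"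
    and "\<And>i. i < n \<Longrightarrow> s i < n + k"
    and "\<And>i j. i < j \<Longrightarrow> j < k \<Longrightarrow> c i < c j"
    and "\<And>j. j < k \<Longrightarrow> c j < n + k"
    and "\<And>i j. i < n \<Longrightarrow> j < k \<Longrightarrow> s i \<noteq> c j"
  shows "det (mat (n+k) (n+k) (\<lambda>(i,j). if i < n then (if j = s i then 1 else 0) else F (i-n) j))
       = (-1)^(\<Sum>i<n. s i - i) * det (mat k k (\<lambda>(i,j). F i (c j)))"
  using assms
proof (induction n arbitrary: s c F)
  case 0
  have "mat (0+k) (0+k) (\<lambda>(i,j). if i < 0 then (if j = s i then 1 else 0) else F (i-0) j)
      = mat k k (\<lambda>(i,j). F i (c j))"
    using smono_id[of k c] 0 by (intro eq_matI) auto
  then show ?case by simp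
next
  case (Suc n)
  define A where "A = mat (Suc n+k) (Suc n+k) (\<lambda>(i,j). if i < Suc n then (if j = s i then 1 else 0) else F (i-Suc n) j)"
  have A: "A \<in> carrier_mat (Suc n+k) (Suc n+k)" unfolding A_def by simp
  have s0: "s 0 < Suc n + k" using Suc.prems(2) by simp
  have "det A = (\<Sum>j<Suc n + k. A $$ (0,j) * cofactor A 0 j)"
    by (rule laplace_expansion_row[OF A]) simp
  also have "\<dots> = (\<Sum>j<Suc n + k. if j = s 0 then cofactor A 0 j else 0)"
    by (intro sum.cong) (auto simp: A_def)
  also have "\<dots> = cofactor A 0 (s 0)" using s0 by simp
  also have "\<dots> = (-1)^(s 0) * det (mat_delete A 0 (s 0))" unfolding cofactor_def by simp
  finally have dA: "det A = (-1)^(s 0) * det (mat_delete A 0 (s 0))" .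
  define s' where "s' = (\<lambda>i. s (Suc i) - 1)"
  define c' where "c' = (\<lambda>j. if c j < s 0 then c j else c j - 1)"
  define F' where "F' = (\<lambda>i j. F i (if j < s 0 then j else Suc j))"
  have sgt: "s 0 < s (Suc i)" if "i < n" for i using Suc.prems(1)[of 0 "Suc i"] that by simp
  have s0k: "s 0 \<le> k"
    using smono_ge[of "Suc n" s 0 n, OF Suc.prems(1)] Suc.prems(2)[of n] by force
  have md: "mat_delete A 0 (s 0) = mat (n+k) (n+k) (\<lambda>(i,j). if i < n then (if j = s' i then 1 else 0) else F' (i-n) j)"
    unfolding mat_delete_def A_def s'_def F'_def
    apply (intro eq_matI)
    apply auto by (drule sgt, linarith)+
  have IH: "det (mat (n+k) (n+k) (\<lambda>(i,j). if i < n then (if j = s' i then 1 else 0) else F' (i-n) j))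
     = (-1)^(\<Sum>i<n. s' i - i) * det (mat k k (\<lambda>(i,j). F' i (c' j)))"
  proof (rule Suc.IH)
    show "s' i < s' j" if "i < j" "j < n" for i j
      using Suc.prems(1)[of "Suc i" "Suc j"] that sgt[of i] unfolding s'_def by simp
    show "s' i < n + k" if "i < n" for i using Suc.prems(2)[of "Suc i"] that sgt[of i] unfolding s'_def by simp
    show "c' i < c' j" if "i < j" "j < k" for i j
      using Suc.prems(3)[of i j] Suc.prems(5)[of 0 i] Suc.prems(5)[of 0 j] that unfolding c'_def by auto
    show "c' j < n + k" if "j < k" for j
      using Suc.prems(4)[of j] Suc.prems(5)[of 0 j] that s0k unfolding c'_def by auto
    show "s' i \<noteq> c' j" if "i < n" "j < k" for i j
      using Suc.prems(5)[of "Suc i" j] Suc.prems(5)[of 0 j] that sgt[of i] unfolding s'_def c'_def by auto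
  qed
  have Fc: "mat k k (\<lambda>(i,j). F' i (c' j)) = mat k k (\<lambda>(i,j). F i (c j))"
  proof -
    have cc: "(if c' j < s 0 then c' j else Suc (c' j)) = c j" if "j < k" for j
      using Suc.prems(5)[of 0 j] that unfolding c'_def by auto
    show ?thesis unfolding F'_def using cc by (intro eq_matI) auto
  qed
  have sum: "(\<Sum>i<Suc n. s i - i) = s 0 + (\<Sum>i<n. s' i - i)"
    unfolding sum.lessThan_Suc_shift s'_def using sgt by (simp add: algebra_simps)
  show ?case
    unfolding A_def[symmetric] dA md IH Fc sum power_add by simp
qed




lemma pad_nu:
  fixes ast a :: "int \<Rightarrow> 'a::comm_ring_1"
  assumes "ast 0 = 1" "\<And>i. i < 0 \<Longrightarrow> ast i = 0"
  shows "det (jt_matrix ast a (\<nu> @ [0]) \<mu>) = det (jt_matrix ast a \<nu> \<mu>)"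
proof -
  define q where "q = length \<nu>"
  define p where "p = length \<mu>"
  define A where "A = jt_matrix ast a (\<nu> @ [0]) \<mu>"
  have A: "A \<in> carrier_mat (Suc (p+q)) (Suc (p+q))"
    unfolding A_def jt_matrix_def Let_def part_len_def p_def q_def by simp
  have A0: "A $$ (0,j) = (if j = 0 then 1 else 0)" if "j < Suc (p+q)" for j
    using that assms unfolding A_def jt_matrix_def Let_def part_len_def p_def q_def
    by (auto simp: nth_append)
  have "det A = (\<Sum>j<Suc (p+q). A $$ (0,j) * cofactor A 0 j)"
    by (rule laplace_expansion_row[OF A]) simp
  also have "\<dots> = (\<Sum>j<Suc (p+q). if j = 0 then cofactor A 0 j else 0)"
    by (intro sum.cong) (auto simp: A0)
  also have "\<dots> = det (mat_delete A 0 0)" by (simp add: cofactor_def)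
  also have "mat_delete A 0 0 = jt_matrix ast a \<nu> \<mu>"
    unfolding A_def jt_matrix_def Let_def part_len_def mat_delete_def
    by (intro eq_matI) (auto simp: nth_append algebra_simps)
  finally show ?thesis unfolding A_def .
qed

lemma pad_mu:
  fixes ast a :: "int \<Rightarrow> 'a::comm_ring_1"
  assumes "a 0 = 1" "\<And>i. i < 0 \<Longrightarrow> a i = 0"
  shows "det (jt_matrix ast a \<nu> (\<mu> @ [0])) = det (jt_matrix ast a \<nu> \<mu>)"
proof -
  define q where "q = length \<nu>"
  define p where "p = length \<mu>"
  define A where "A = jt_matrix ast a \<nu> (\<mu> @ [0])"
  have A: "A \<in> carrier_mat (Suc (p+q)) (Suc (p+q))"
    unfolding A_def jt_matrix_def Let_def part_len_def p_def q_def by simp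
  have A0: "A $$ (p+q,j) = (if j = p+q then 1 else 0)" if "j < Suc (p+q)" for j
    using that assms unfolding A_def jt_matrix_def Let_def part_len_def p_def q_def
    by (auto simp: nth_append)
  have "det A = (\<Sum>j<Suc (p+q). A $$ (p+q,j) * cofactor A (p+q) j)"
    by (rule laplace_expansion_row[OF A]) simp
  also have "\<dots> = (\<Sum>j<Suc (p+q). if j = p+q then cofactor A (p+q) j else 0)"
    by (intro sum.cong) (auto simp: A0)
  also have "\<dots> = (-1)^(2*(p+q)) * det (mat_delete A (p+q) (p+q))" by (simp add: cofactor_def mult_2)
  also have "\<dots> = det (mat_delete A (p+q) (p+q))" by (simp add: power_mult)
  also have "mat_delete A (p+q) (p+q) = jt_matrix ast a \<nu> \<mu>"
    unfolding A_def jt_matrix_def Let_def part_len_def mat_delete_def p_def q_def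
    by (intro eq_matI) (auto simp: nth_append algebra_simps)
  finally show ?thesis unfolding A_def .
qed

lemma pad_both:
  fixes ast a :: "int \<Rightarrow> 'a::comm_ring_1"
  assumes "a 0 = 1" "\<And>i. i < 0 \<Longrightarrow> a i = 0" "ast 0 = 1" "\<And>i. i < 0 \<Longrightarrow> ast i = 0"
  shows "det (jt_matrix ast a (\<nu> @ replicate m 0) (\<mu> @ replicate m' 0)) = det (jt_matrix ast a \<nu> \<mu>)"
proof -
  have 1: "det (jt_matrix ast a (\<nu> @ replicate m 0) \<mu>') = det (jt_matrix ast a \<nu> \<mu>')" for \<mu>'
  proof (induction m)
    case (Suc m)
    have "\<nu> @ replicate (Suc m) 0 = (\<nu> @ replicate m 0) @ [0]" by (simp add: replicate_append_same)
    then show ?case using pad_nu[where ast=ast and \<nu>="\<nu> @ replicate m 0", OF assms(3,4)] Suc by simp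
  qed simp
  have 2: "det (jt_matrix ast a \<nu>' (\<mu> @ replicate m' 0)) = det (jt_matrix ast a \<nu>' \<mu>)" for \<nu>'
  proof (induction m')
    case (Suc m)
    have "\<mu> @ replicate (Suc m) 0 = (\<mu> @ replicate m 0) @ [0]" by (simp add: replicate_append_same)
    then show ?case using pad_mu[where a=a and \<mu>="\<mu> @ replicate m 0", OF assms(1,2)] Suc by simp
  qed simp
  show ?thesis using 1 2 by simp
qed




lemma mat_mult_entry:
  assumes "i < n" "j < n"
  shows "(mat n n f * mat n n g) $$ (i,j) = (\<Sum>t<n. f (i,t) * g (t,j))"
  using assms by (simp add: scalar_prod_def atLeast0LessThan)

lemma conv_delta:
  fixes x y :: "int \<Rightarrow> 'a::comm_ring_1"
  assumes x: "\<And>i. i < 0 \<Longrightarrow> x i = 0" and y: "\<And>i. i < 0 \<Longrightarrow> y i = 0"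
    and xy: "gen_fps x * gen_fps y = 1" and "u < w" "v < w"
  shows "(\<Sum>t<w. x (int t - int u) * y (int v - int t)) = (if u = v then 1 else 0)"
proof (cases "u \<le> v")
  case False
  have "x (int t - int u) * y (int v - int t) = 0" for t
    using False x[of "int t - int u"] y[of "int v - int t"] by (cases "t < u") auto
  then show ?thesis using False by simp
next
  case True
  have "(\<Sum>t<w. x (int t - int u) * y (int v - int t)) = (\<Sum>t\<in>{u..v}. x (int t - int u) * y (int v - int t))"
  proof (rule sum.mono_neutral_right)
    show "{u..v} \<subseteq> {..<w}" using assms by auto
    show "\<forall>t\<in>{..<w} - {u..v}. x (int t - int u) * y (int v - int t) = 0"
    proof
      fix t assume "t \<in> {..<w} - {u..v}"
      then have "t < u \<or> v < t" by auto
      then show "x (int t - int u) * y (int v - int t) = 0"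
        using x[of "int t - int u"] y[of "int v - int t"] by auto
    qed
  qed simp
  also have "\<dots> = (\<Sum>i\<in>{0+u..(v-u)+u}. x (int i - int u) * y (int v - int i))"
    using True by simp
  also have "\<dots> = (\<Sum>i=0..v-u. x (int i) * y (int (v-u-i)))"
    unfolding sum.shift_bounds_cl_nat_ivl
    by (intro sum.cong) (use True in \<open>auto simp: of_nat_diff algebra_simps\<close>)
  also have "\<dots> = fps_nth (gen_fps x * gen_fps y) (v - u)"
    unfolding fps_mult_nth gen_fps_def by simp
  also have "\<dots> = (if u = v then 1 else 0)" using True xy by auto
  finally show ?thesis .
qed

lemma det_upper_toeplitz:
  fixes b :: "int \<Rightarrow> 'a::comm_ring_1"
  assumes "b 0 = 1" "\<And>i. i < 0 \<Longrightarrow> b i = 0"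
  shows "det (mat n n (\<lambda>(i,j). b (int j - int i))) = 1"
proof -
  have "det (mat n n (\<lambda>(i,j). b (int j - int i))) = prod_list (diag_mat (mat n n (\<lambda>(i,j). b (int j - int i))))"
    by (rule det_upper_triangular[of _ n]) (auto simp: upper_triangular_def assms)
  also have "\<dots> = 1" unfolding prod_list_diag_prod using assms by simp
  finally show ?thesis .
qed

lemma det_lower_toeplitz:
  fixes b :: "int \<Rightarrow> 'a::comm_ring_1"
  assumes "b 0 = 1" "\<And>i. i < 0 \<Longrightarrow> b i = 0"
  shows "det (mat n n (\<lambda>(i,j). b (int i - int j))) = 1"
proof -
  have "det (mat n n (\<lambda>(i,j). b (int i - int j))) = prod_list (diag_mat (mat n n (\<lambda>(i,j). b (int i - int j))))"
    by (rule det_lower_triangular[of n]) (auto simp: assms)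
  also have "\<dots> = 1" unfolding prod_list_diag_prod using assms by simp
  finally show ?thesis .
qed

lemma det_transpose_fun:
  "det (mat n n (\<lambda>(i,j). F j i)) = det (mat n n (\<lambda>(i,j). F i j))"
proof -
  have "mat n n (\<lambda>(i,j). F j i) = transpose_mat (mat n n (\<lambda>(i,j). F i j))"
    by (intro eq_matI) auto
  then show ?thesis using det_transpose[of "mat n n (\<lambda>(i,j). F i j)" n] by simp
qed

lemma det_reverse_fun:
  fixes F :: "nat \<Rightarrow> nat \<Rightarrow> 'a::comm_ring_1"
  shows "det (mat n n (\<lambda>(i,j). F (n-1-i) (n-1-j))) = det (mat n n (\<lambda>(i,j). F i j))"
proof -
  define p where "p = (\<lambda>i. if i < n then n - 1 - i else i)"
  have pp: "p permutes {0..<n}"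
  proof (rule bij_imp_permutes)
    show "bij_betw p {0..<n} {0..<n}"
      by (rule bij_betw_byWitness[where f'=p]) (auto simp: p_def)
    show "\<And>x. x \<notin> {0..<n} \<Longrightarrow> p x = x" by (auto simp: p_def)
  qed
  have ss: "(signof p :: 'a) * signof p = 1"
    by (metis of_int_1 of_int_mult sign_idempotent)
  define B where "B = mat n n (\<lambda>(i,j). F i (n-1-j))"
  have "det (mat n n (\<lambda>(i,j). F (n-1-i) (n-1-j))) = det (mat n n (\<lambda>(i,j). B $$ (p i, j)))"
    by (intro arg_cong[of _ _ det] eq_matI) (auto simp: B_def p_def)
  also have "\<dots> = signof p * det B" by (rule det_permute_rows[OF _ pp]) (simp add: B_def)
  also have "det B = det (mat n n (\<lambda>(i,j). F j (n-1-i)))"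
    unfolding B_def using det_transpose_fun[of n "\<lambda>x y. F y (n-1-x)"] by simp
  also have "\<dots> = det (mat n n (\<lambda>(i,j). (mat n n (\<lambda>(i,j). F j i)) $$ (p i, j)))"
    by (intro arg_cong[of _ _ det] eq_matI) (auto simp: p_def)
  also have "\<dots> = signof p * det (mat n n (\<lambda>(i,j). F j i))"
    by (rule det_permute_rows[OF _ pp]) simp
  also have "det (mat n n (\<lambda>(i,j). F j i)) = det (mat n n (\<lambda>(i,j). F i j))"
    by (rule det_transpose_fun)
  finally show ?thesis using ss by (simp add: mult.assoc[symmetric])
qed




definition nth0 :: "nat list \<Rightarrow> nat \<Rightarrow> nat" where
  "nth0 xs i = (if i < length xs then xs ! i else 0)"

definition cnt :: "nat list \<Rightarrow> nat \<Rightarrow> nat" where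
  "cnt xs j = length (filter (\<lambda>x. Suc j \<le> x) xs)"

lemma pad_nth: "i < length xs + m \<Longrightarrow> (xs @ replicate m 0) ! i = nth0 xs i"
  by (auto simp: nth0_def nth_append)

lemma conj_len: "length (conj_part xs) = (if xs = [] then 0 else Max (set xs))"
  by (simp add: conj_part_def)

lemma le_conj_len: "x \<in> set xs \<Longrightarrow> x \<le> length (conj_part xs)"
  by (auto simp: conj_len)

lemma nth0_conj: "nth0 (conj_part xs) j = cnt xs j"
proof (cases "j < length (conj_part xs)")
  case True
  then show ?thesis unfolding nth0_def cnt_def by (simp add: conj_part_def del: upt_Suc)
next
  case False
  then have "\<forall>x\<in>set xs. \<not> Suc j \<le> x" using le_conj_len[of _ xs] by force
  then have "filter (\<lambda>x. Suc j \<le> x) xs = []" by (simp add: filter_empty_conv)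
  then show ?thesis using False unfolding nth0_def cnt_def by simp
qed

lemma cnt_le: "cnt xs j \<le> length xs"
  unfolding cnt_def by simp

lemma cnt_mono: "j \<le> j' \<Longrightarrow> cnt xs j' \<le> cnt xs j"
  unfolding cnt_def by (induction xs) auto

lemma nth0_le: "nth0 xs i \<le> length (conj_part xs)"
  unfolding nth0_def using le_conj_len[of "xs ! i" xs] by auto

lemma part_dec: assumes "is_partition xs" "i \<le> i'" shows "nth0 xs i' \<le> nth0 xs i"
proof -
  have s: "sorted_wrt (\<ge>) xs" using assms(1) by (simp add: is_partition_def)
  show ?thesis
  proof (cases "i' < length xs")
    case True
    then show ?thesis using assms(2) s unfolding nth0_def
      by (cases "i = i'") (auto simp: sorted_wrt_iff_nth_less)
  qed (simp add: nth0_def)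
qed

lemma cnt_card: "cnt xs j = card {t. t < length xs \<and> Suc j \<le> xs ! t}"
  unfolding cnt_def by (simp add: length_filter_conv_card)

lemma key_neq: assumes "is_partition xs"
  shows "nth0 xs i + cnt xs j \<noteq> i + j + 1"
proof (cases "Suc j \<le> nth0 xs i")
  case True
  then have il: "i < length xs" by (auto simp: nth0_def split: if_splits)
  have "{..i} \<subseteq> {t. t < length xs \<and> Suc j \<le> xs ! t}"
  proof
    fix t assume "t \<in> {..i}"
    then have "t \<le> i" by simp
    then have "nth0 xs i \<le> nth0 xs t" by (rule part_dec[OF assms])
    then show "t \<in> {t. t < length xs \<and> Suc j \<le> xs ! t}"
      using True il \<open>t \<le> i\<close> by (auto simp: nth0_def)
  qed
  then have "card {..i} \<le> cnt xs j" unfolding cnt_card by (intro card_mono) auto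
  then show ?thesis using True by simp
next
  case False
  have "{t. t < length xs \<and> Suc j \<le> xs ! t} \<subseteq> {..<i}"
  proof
    fix t assume t: "t \<in> {t. t < length xs \<and> Suc j \<le> xs ! t}"
    show "t \<in> {..<i}"
    proof (rule ccontr)
      assume "t \<notin> {..<i}"
      then have "i \<le> t" by simp
      then have "nth0 xs t \<le> nth0 xs i" by (rule part_dec[OF assms])
      then show False using t False by (auto simp: nth0_def)
    qed
  qed
  then have "cnt xs j \<le> card {..<i}" unfolding cnt_card by (intro card_mono) auto
  then show ?thesis using False by simp
qed

lemma sum_nth0: "length xs \<le> L \<Longrightarrow> (\<Sum>i<L. nth0 xs i) = sum_list xs"
proof (induction xs arbitrary: L)
  case Nil then show ?case by (simp add: nth0_def)
next
  case (Cons x xs)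
  then obtain L' where L: "L = Suc L'" by (cases L) auto
  have "(\<Sum>i<L. nth0 (x # xs) i) = x + (\<Sum>i<L'. nth0 xs i)"
    unfolding L sum.lessThan_Suc_shift nth0_def
    by (simp, intro sum.cong, auto)
  then show ?case using Cons L by simp
qed

lemma sum_cnt: "(\<forall>x\<in>set xs. x \<le> K) \<Longrightarrow> (\<Sum>j<K. cnt xs j) = sum_list xs"
proof (induction xs)
  case Nil then show ?case by (simp add: cnt_def)
next
  case (Cons x xs)
  have "(\<Sum>j<K. cnt (x # xs) j) = (\<Sum>j<K. (if j < x then 1 else 0)) + (\<Sum>j<K. cnt xs j)"
    unfolding cnt_def sum.distrib[symmetric] by (intro sum.cong) auto
  also have "(\<Sum>j<K. (if j < x then 1 else 0::nat)) = card {j. j < K \<and> j < x}"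
    by (simp add: sum.If_cases Int_def)
  also have "{j. j < K \<and> j < x} = {..<x}" using Cons.prems by auto
  finally show ?case using Cons by simp
qed

lemma sum_cnt_conj: "length (conj_part xs) \<le> K \<Longrightarrow> (\<Sum>j<K. cnt xs j) = sum_list xs"
  using le_conj_len[of _ xs] by (intro sum_cnt) force




theorem mainTheorem19:
  fixes a ast b bst :: "int \<Rightarrow> 'a::comm_ring_1"
    and \<nu> \<mu> :: "nat list"
  assumes "a 0 = 1" "ast 0 = 1" "b 0 = 1" "bst 0 = 1"
    and "\<And>i. i < 0 \<Longrightarrow> a i = 0" "\<And>i. i < 0 \<Longrightarrow> ast i = 0"
    and "\<And>i. i < 0 \<Longrightarrow> b i = 0" "\<And>i. i < 0 \<Longrightarrow> bst i = 0"
    and "gen_fps a * gen_fps b = 1"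
    and "gen_fps ast * gen_fps bst = 1"
    and "is_partition \<nu>" "is_partition \<mu>"
  shows "det (jt_matrix ast a \<nu> \<mu>)
         = (-1) ^ (part_size \<nu> + part_size \<mu>) * det (jt_matrix bst b (conj_part \<nu>) (conj_part \<mu>))"
proof -
  note a0 = assms(1) and ast0 = assms(2) and b0 = assms(3) and bst0 = assms(4)
  note an = assms(5) and astn = assms(6) and bn = assms(7) and bstn = assms(8)
  note ab = assms(9) and astbst = assms(10) and pnu = assms(11) and pmu = assms(12)
  define q where "q = length \<nu>"
  define p where "p = length \<mu>"
  define s0 where "s0 = length (conj_part \<nu>)"
  define r0 where "r0 = length (conj_part \<mu>)"
  define Q where "Q = q + r0"
  define P where "P = p + s0"
  define w where "w = P + Q"
  define nu2 where "nu2 = \<nu> @ replicate r0 0"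
  define mu2 where "mu2 = \<mu> @ replicate s0 0"
  define nuc where "nuc = conj_part \<nu> @ replicate p 0"
  define muc where "muc = conj_part \<mu> @ replicate q 0"
  have lnu2: "length nu2 = Q" and lmu2: "length mu2 = P" and lnuc: "length nuc = P" and lmuc: "length muc = Q"
    unfolding nu2_def mu2_def nuc_def muc_def Q_def P_def p_def q_def s0_def r0_def by auto
  have nu2i: "nu2 ! i = nth0 \<nu> i" if "i < Q" for i
    unfolding nu2_def using that by (intro pad_nth) (simp add: Q_def q_def)
  have mu2i: "mu2 ! i = nth0 \<mu> i" if "i < P" for i
    unfolding mu2_def using that by (intro pad_nth) (simp add: P_def p_def)
  have nuci: "nuc ! i = cnt \<nu> i" if "i < P" for i
    unfolding nuc_def using that nth0_conj[of \<nu> i] by (subst pad_nth) (simp_all add: P_def s0_def)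
  have muci: "muc ! i = cnt \<mu> i" if "i < Q" for i
    unfolding muc_def using that nth0_conj[of \<mu> i] by (subst pad_nth) (simp_all add: Q_def r0_def)
  have hnu: "nth0 \<nu> i \<le> s0" for i unfolding s0_def by (rule nth0_le)
  have hmu: "nth0 \<mu> i \<le> r0" for i unfolding r0_def by (rule nth0_le)
  have hmuQ: "nth0 \<mu> i \<le> Q" for i using hmu[of i] by (simp add: Q_def)
  have cnu: "cnt \<nu> i \<le> q" for i unfolding q_def by (rule cnt_le)
  have cmu: "cnt \<mu> i \<le> p" for i unfolding p_def by (rule cnt_le)

  have dA: "det (jt_matrix ast a \<nu> \<mu>) = det (jt_matrix ast a nu2 mu2)"
    unfolding nu2_def mu2_def by (rule pad_both[where a=a and ast=ast, OF a0 an ast0 astn, symmetric])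
  have dB: "det (jt_matrix bst b (conj_part \<nu>) (conj_part \<mu>)) = det (jt_matrix bst b nuc muc)"
    unfolding nuc_def muc_def by (rule pad_both[where a=b and ast=bst, OF b0 bn bst0 bstn, symmetric])

  define r1 where "r1 = (\<lambda>i. nth0 \<nu> (Q-1-i) + i)"
  define r2 where "r2 = (\<lambda>i. Q + i - nth0 \<mu> i)"
  define c2 where "c2 = (\<lambda>j. cnt \<mu> (Q-1-j) + j)"
  define r1' where "r1' = (\<lambda>i. cnt \<nu> (P-1-i) + i)"
  define r2' where "r2' = (\<lambda>i. P + i - cnt \<mu> i)"
  define c1' where "c1' = (\<lambda>j. P + j - nth0 \<nu> j)"
  define N where "N = (\<lambda>u v. \<Sum>t<w. ast (int u - int t) * b (int v - int t))"
  define N' where "N' = (\<lambda>u v. \<Sum>t<w. b (int t - int u) * ast (int t - int v))"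

  have GA: "jt_matrix ast a nu2 mu2 = mat w w (\<lambda>(i,j). if i < Q then ast (int (r1 i) - int j)
                 else a (int j - int (r2 (i-Q))))"
  proof (intro eq_matI)
    fix i j assume "i < dim_row (mat w w (\<lambda>(i,j). if i < Q then ast (int (r1 i) - int j)
                 else a (int j - int (r2 (i-Q)))))" "j < dim_col (mat w w (\<lambda>(i,j). if i < Q then ast (int (r1 i) - int j)
                 else a (int j - int (r2 (i-Q)))))"
    then have ij: "i < w" "j < w" by auto
    show "jt_matrix ast a nu2 mu2 $$ (i, j) = mat w w (\<lambda>(i,j). if i < Q then ast (int (r1 i) - int j)
                 else a (int j - int (r2 (i-Q)))) $$ (i, j)"
    proof (cases "i < Q")
      case True
      then show ?thesis using ij nu2i[of "Q-1-i"]
        unfolding jt_matrix_def Let_def part_len_def lnu2 lmu2 w_def r1_def by simp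
    next
      case False
      have "nth0 \<mu> (i - Q) \<le> i" using hmu[of "i-Q"] False unfolding Q_def by simp
      then show ?thesis using ij mu2i[of "i-Q"] False
        unfolding jt_matrix_def Let_def part_len_def lnu2 lmu2 w_def r2_def
        by (simp add: of_nat_diff algebra_simps)
    qed
  qed (auto simp: jt_matrix_def Let_def part_len_def lnu2 lmu2 w_def)
  define UB where "UB = mat w w (\<lambda>(i,j). b (int j - int i))"
  have dUB: "det UB = 1" unfolding UB_def by (rule det_upper_toeplitz[where b=b, OF b0 bn])
  have GAUB: "jt_matrix ast a nu2 mu2 * UB = mat w w (\<lambda>(i,j). if i < Q then N (r1 i) j
                 else (if j = r2 (i-Q) then 1 else 0))"
  proof (intro eq_matI)
    fix i j assume "i < dim_row (mat w w (\<lambda>(i,j). if i < Q then N (r1 i) j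
                 else (if j = r2 (i-Q) then 1 else (0::'a))))" "j < dim_col (mat w w (\<lambda>(i,j). if i < Q then N (r1 i) j
                 else (if j = r2 (i-Q) then 1 else (0::'a))))"
    then have ij: "i < w" "j < w" by auto
    have e: "(jt_matrix ast a nu2 mu2 * UB) $$ (i,j) = (\<Sum>t<w. (if i < Q then ast (int (r1 i) - int t)
                 else a (int t - int (r2 (i-Q)))) * b (int j - int t))"
      unfolding GA UB_def by (subst mat_mult_entry[OF ij]) simp
    show "(jt_matrix ast a nu2 mu2 * UB) $$ (i,j) = mat w w (\<lambda>(i,j). if i < Q then N (r1 i) j
                 else (if j = r2 (i-Q) then 1 else 0)) $$ (i,j)"
    proof (cases "i < Q")
      case True then show ?thesis unfolding e using ij by (simp add: N_def)
    next
      case False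
      have "r2 (i - Q) < w" using ij False unfolding r2_def by simp
      then show ?thesis unfolding e using ij False conv_delta[where x=a and y=b, OF an bn ab, of "r2 (i-Q)" w j] by simp
    qed
  qed (auto simp: UB_def GA)
  have detA1: "det (jt_matrix ast a nu2 mu2) = det (mat w w (\<lambda>(i,j). if i < Q then N (r1 i) j
                 else (if j = r2 (i-Q) then 1 else 0)))"
    using det_mult[of "jt_matrix ast a nu2 mu2" w UB] dUB GAUB unfolding GA UB_def by simp
  also have "\<dots> = (-1)^(P*Q) * det (mat (P+Q) (P+Q) (\<lambda>(i,j). if i < P then (if j = r2 i then 1 else 0)
                 else N (r1 (i-P)) j))"
  proof -
    have "det (mat w w (\<lambda>(i,j). if i < Q then N (r1 i) j else (if j = r2 (i-Q) then 1 else 0)))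
      = (-1)^(P*Q) * det (mat (P+Q) (P+Q) (\<lambda>(i,j). (mat w w (\<lambda>(i,j). if i < Q then N (r1 i) j else (if j = r2 (i-Q) then 1 else 0))) $$ ((if i < P then i + Q else i - P), j)))"
      by (rule det_swap_rows) (simp add: w_def)
    also have "mat (P+Q) (P+Q) (\<lambda>(i,j). (mat w w (\<lambda>(i,j). if i < Q then N (r1 i) j else (if j = r2 (i-Q) then 1 else 0))) $$ ((if i < P then i + Q else i - P), j))
       = mat (P+Q) (P+Q) (\<lambda>(i,j). if i < P then (if j = r2 i then 1 else 0) else N (r1 (i-P)) j)"
      by (intro eq_matI) (auto simp: w_def)
    finally show ?thesis .
  qed
  also have "\<dots> = (-1)^(P*Q) * ((-1)^(\<Sum>i<P. r2 i - i) * det (mat Q Q (\<lambda>(i,j). N (r1 i) (c2 j))))"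
  proof -
    have "det (mat (P+Q) (P+Q) (\<lambda>(i,j). if i < P then (if j = r2 i then 1 else 0) else N (r1 (i-P)) j))
       = (-1)^(\<Sum>i<P. r2 i - i) * det (mat Q Q (\<lambda>(i,j). N (r1 i) (c2 j)))"
    proof (rule core_det[where F="\<lambda>i j. N (r1 i) j"])
      show "r2 i < r2 j" if "i < j" "j < P" for i j
        using part_dec[OF pmu, of i j] hmu[of i] hmu[of j] that unfolding r2_def Q_def by simp
      show "r2 i < P + Q" if "i < P" for i using that unfolding r2_def by simp
      show "c2 i < c2 j" if "i < j" "j < Q" for i j
        using that unfolding c2_def by (intro add_le_less_mono cnt_mono) auto
      show "c2 j < P + Q" if "j < Q" for j using that cmu[of "Q-1-j"] unfolding c2_def P_def by simp
      show "r2 i \<noteq> c2 j" if "i < P" "j < Q" for i j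
        using key_neq[OF pmu, of i "Q-1-j"] hmu[of i] that unfolding r2_def c2_def Q_def by auto
    qed
    then show ?thesis by simp
  qed
  finally have detA: "det (jt_matrix ast a nu2 mu2) = (-1)^(P*Q) * (-1)^(\<Sum>i<P. r2 i - i) * det (mat Q Q (\<lambda>(i,j). N (r1 i) (c2 j)))"
    by (simp add: mult.assoc)
  have sumA: "(\<Sum>i<P. r2 i - i) = P*Q - sum_list \<mu>"
  proof -
    have "(\<Sum>i<P. r2 i - i) = (\<Sum>i<P. Q - nth0 \<mu> i)"
      by (intro sum.cong) (use hmu in \<open>auto simp: r2_def Q_def\<close>)
    also have "\<dots> = (\<Sum>i<P. Q) - (\<Sum>i<P. nth0 \<mu> i)"
      by (rule sum_subtractf_nat) (use hmuQ in \<open>auto\<close>)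
    also have "(\<Sum>i<P. nth0 \<mu> i) = sum_list \<mu>" by (rule sum_nth0) (simp add: P_def p_def)
    finally show ?thesis by simp
  qed
  have muPQ: "sum_list \<mu> \<le> P*Q"
  proof -
    have "sum_list \<mu> = (\<Sum>i<P. nth0 \<mu> i)" by (rule sum_nth0[symmetric]) (simp add: P_def p_def)
    also have "\<dots> \<le> (\<Sum>i<P. Q)" by (intro sum_mono) (use hmuQ in \<open>auto\<close>)
    finally show ?thesis by simp
  qed

  have GB: "jt_matrix bst b nuc muc = mat w w (\<lambda>(i,j). if i < P then bst (int (r1' i) - int j)
                 else b (int j - int (r2' (i-P))))"
  proof (intro eq_matI)
    fix i j assume "i < dim_row (mat w w (\<lambda>(i,j). if i < P then bst (int (r1' i) - int j)
                 else b (int j - int (r2' (i-P)))))" "j < dim_col (mat w w (\<lambda>(i,j). if i < P then bst (int (r1' i) - int j)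
                 else b (int j - int (r2' (i-P)))))"
    then have ij: "i < w" "j < w" by auto
    show "jt_matrix bst b nuc muc $$ (i, j) = mat w w (\<lambda>(i,j). if i < P then bst (int (r1' i) - int j)
                 else b (int j - int (r2' (i-P)))) $$ (i, j)"
    proof (cases "i < P")
      case True
      then show ?thesis using ij nuci[of "P-1-i"]
        unfolding jt_matrix_def Let_def part_len_def lnuc lmuc w_def r1'_def by simp
    next
      case False
      have "cnt \<mu> (i - P) \<le> i" using cmu[of "i-P"] False unfolding P_def by simp
      then show ?thesis using ij muci[of "i-P"] False
        unfolding jt_matrix_def Let_def part_len_def lnuc lmuc w_def r2'_def
        by (simp add: of_nat_diff algebra_simps)
    qed
  qed (auto simp: jt_matrix_def Let_def part_len_def lnuc lmuc w_def)
  define LA where "LA = mat w w (\<lambda>(i,j). ast (int i - int j))"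
  have dLA: "det LA = 1" unfolding LA_def by (rule det_lower_toeplitz[where b=ast, OF ast0 astn])
  have GBLA: "jt_matrix bst b nuc muc * LA = mat w w (\<lambda>(i,j). if i < P then (if j = r1' i then 1 else 0)
                 else N' (r2' (i-P)) j)"
  proof (intro eq_matI)
    fix i j assume "i < dim_row (mat w w (\<lambda>(i,j). if i < P then (if j = r1' i then 1 else (0::'a))
                 else N' (r2' (i-P)) j))" "j < dim_col (mat w w (\<lambda>(i,j). if i < P then (if j = r1' i then 1 else (0::'a))
                 else N' (r2' (i-P)) j))"
    then have ij: "i < w" "j < w" by auto
    have e: "(jt_matrix bst b nuc muc * LA) $$ (i,j) = (\<Sum>t<w. (if i < P then bst (int (r1' i) - int t)
                 else b (int t - int (r2' (i-P)))) * ast (int t - int j))"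
      unfolding GB LA_def by (subst mat_mult_entry[OF ij]) simp
    show "(jt_matrix bst b nuc muc * LA) $$ (i,j) = mat w w (\<lambda>(i,j). if i < P then (if j = r1' i then 1 else 0)
                 else N' (r2' (i-P)) j) $$ (i,j)"
    proof (cases "i < P")
      case False then show ?thesis unfolding e using ij by (simp add: N'_def)
    next
      case True
      have "r1' i < w" using ij True cnu[of "P-1-i"] unfolding r1'_def w_def Q_def by simp
      then have cd: "(\<Sum>t<w. bst (int (r1' i) - int t) * ast (int t - int j)) = (if j = r1' i then 1 else 0)"
        using ij conv_delta[where x=ast and y=bst, OF astn bstn astbst, of j w "r1' i"]
        by (simp add: mult.commute)
      show ?thesis unfolding e using ij True cd by simp
    qed
  qed (auto simp: LA_def GB)
  have detB1: "det (jt_matrix bst b nuc muc) = det (mat (P+Q) (P+Q) (\<lambda>(i,j). if i < P then (if j = r1' i then 1 else 0)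
                 else N' (r2' (i-P)) j))"
    using det_mult[of "jt_matrix bst b nuc muc" w LA] dLA GBLA unfolding GB LA_def w_def by simp
  also have "\<dots> = (-1)^(\<Sum>i<P. r1' i - i) * det (mat Q Q (\<lambda>(i,j). N' (r2' i) (c1' j)))"
  proof (rule core_det[where F="\<lambda>i j. N' (r2' i) j"])
    show "r1' i < r1' j" if "i < j" "j < P" for i j
      using that unfolding r1'_def by (intro add_le_less_mono cnt_mono) auto
    show "r1' i < P + Q" if "i < P" for i using that cnu[of "P-1-i"] unfolding r1'_def Q_def by simp
    show "c1' i < c1' j" if "i < j" "j < Q" for i j
      using part_dec[OF pnu, of i j] hnu[of i] hnu[of j] that unfolding c1'_def P_def by simp
    show "c1' j < P + Q" if "j < Q" for j using that unfolding c1'_def by simp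
    show "r1' i \<noteq> c1' j" if "i < P" "j < Q" for i j
      using key_neq[OF pnu, of j "P-1-i"] hnu[of j] that unfolding r1'_def c1'_def P_def by auto
  qed
  finally have detB: "det (jt_matrix bst b nuc muc) = (-1)^(\<Sum>i<P. r1' i - i) * det (mat Q Q (\<lambda>(i,j). N' (r2' i) (c1' j)))" .
  have sumB: "(\<Sum>i<P. r1' i - i) = sum_list \<nu>"
  proof -
    have "(\<Sum>i<P. r1' i - i) = (\<Sum>i<P. cnt \<nu> (P - Suc i))"
      by (intro sum.cong) (auto simp: r1'_def)
    also have "\<dots> = (\<Sum>i<P. cnt \<nu> i)" by (rule sum.nat_diff_reindex)
    also have "\<dots> = sum_list \<nu>" by (rule sum_cnt_conj) (simp add: P_def s0_def)
    finally show ?thesis .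
  qed

  have persym: "N' x y = N (w-1-y) (w-1-x)" if "x < w" "y < w" for x y
  proof -
    have "N (w-1-y) (w-1-x) = (\<Sum>t<w. ast (int (w-1-y) - int (w - Suc t)) * b (int (w-1-x) - int (w - Suc t)))"
      unfolding N_def by (rule sum.nat_diff_reindex[symmetric])
    also have "\<dots> = (\<Sum>t<w. b (int t - int x) * ast (int t - int y))"
      by (intro sum.cong) (use that in \<open>auto simp: of_nat_diff mult.commute\<close>)
    finally show ?thesis unfolding N'_def by simp
  qed
  have "det (mat Q Q (\<lambda>(i,j). N' (r2' i) (c1' j))) = det (mat Q Q (\<lambda>(i,j). N (r1 (Q-1-j)) (c2 (Q-1-i))))"
  proof (intro arg_cong[of _ _ det] eq_matI)
    fix i j assume "i < dim_row (mat Q Q (\<lambda>(i,j). N (r1 (Q-1-j)) (c2 (Q-1-i))))"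
      "j < dim_col (mat Q Q (\<lambda>(i,j). N (r1 (Q-1-j)) (c2 (Q-1-i))))"
    then have ij: "i < Q" "j < Q" by auto
    have x: "r2' i < w" "c1' j < w" using ij cmu[of i] unfolding r2'_def c1'_def w_def P_def by auto
    have "w - 1 - c1' j = r1 (Q-1-j)" using ij hnu[of j] unfolding c1'_def r1_def w_def P_def by auto
    moreover have "w - 1 - r2' i = c2 (Q-1-i)" using ij cmu[of i] unfolding r2'_def c2_def w_def P_def by auto
    ultimately show "mat Q Q (\<lambda>(i,j). N' (r2' i) (c1' j)) $$ (i,j) = mat Q Q (\<lambda>(i,j). N (r1 (Q-1-j)) (c2 (Q-1-i))) $$ (i,j)"
      using ij persym[OF x] by simp
  qed auto
  also have "\<dots> = det (mat Q Q (\<lambda>(i,j). N (r1 j) (c2 i)))"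
    by (rule det_reverse_fun[where F="\<lambda>i j. N (r1 j) (c2 i)"])
  also have "\<dots> = det (mat Q Q (\<lambda>(i,j). N (r1 i) (c2 j)))"
    by (rule det_transpose_fun)
  finally have DD: "det (mat Q Q (\<lambda>(i,j). N' (r2' i) (c1' j))) = det (mat Q Q (\<lambda>(i,j). N (r1 i) (c2 j)))" .

  define D where "D = det (mat Q Q (\<lambda>(i,j). N (r1 i) (c2 j)))"
  have 1: "det (jt_matrix ast a \<nu> \<mu>) = (-1)^(P*Q) * (-1)^(P*Q - sum_list \<mu>) * D"
    using dA detA sumA unfolding D_def by simp
  have 2: "det (jt_matrix bst b (conj_part \<nu>) (conj_part \<mu>)) = (-1)^(sum_list \<nu>) * D"
    using dB detB sumB DD unfolding D_def by simp
  have sg: "(-1::'a)^(P*Q) * (-1)^(P*Q - sum_list \<mu>) = (-1)^(sum_list \<mu>)"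
    unfolding minus_one_power_iff using muPQ by (auto simp: even_diff_nat)
  have 3: "det (jt_matrix ast a \<nu> \<mu>) = (-1)^(sum_list \<mu>) * D" using 1 sg by simp
  show ?thesis unfolding 3 2 part_size_def minus_one_power_iff by auto
qed


end
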